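(* Let $h:\mathbb{R}\to\mathbb{R}$ be a smooth function that is flat at $0$ (all derivatives vanish at $0$, and $h(0)=0$) and positive everywhere else, such that the vector field $\xi=h\,\partial/\partial x$ is complete (e.g. $h(x)=e^{-1/x^2}$ for $x\neq0$, $h(0)=0$). Let $\psi:\mathbb{R}\to\mathbb{R}$ be the time-one flow of $\xi$, and let $\hat\psi(x)=\psi(x)$ for $x\ge0$ and $\hat\psi(x)=\psi^{-1}(x)$ for $x<0$. Let $G$ be a copy of $\mathbb{Z}$ acting on $\mathbb{R}$ with generator acting by $\psi$, and $H$ a copy of $\mathbb{Z}$ acting on $\mathbb{R}$ with generator acting by $\hat\psi$; these actions have the same orbits, so $\mathbb{R}/G=\mathbb{R}/H$. Then the identity map of this orbit space does not lift to an invertible (biprincipal) bibundle between the action groupoids $G\ltimes\mathbb{R}$ and $H\ltimes\mathbb{R}$; moreover, these action groupoids are not Morita equivalent.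
   Context: For a group $K$ acting on a manifold $M$, the action groupoid $K\ltimes M$ has arrows $K\times M$, base $M$, $s(k,x)=x$, $t(k,x)=kx$. A bibundle $P:G\to H$ between Lie groupoids is a manifold with a left $G$-action along $a:P\to G_0$ and commuting right $H$-action along $a':P\to H_0$ such that $a'$ is $G$-invariant and $a$ is a principal $H$-bundle (an $H$-invariant surjective submersion with $(p,h)\mapsto(p,ph)$ a diffeomorphism $P\times_{a',t}H\to P\times_{G_0}P$). It is invertible (biprincipal) if $a'$ is also a principal $G$-bundle; it lifts a map $f:|G|\to|H|$ of orbit spaces if $f([a(p)])=[a'(p)]$ for all $p$. Two Lie groupoids are Morita equivalent if there is an invertible bibundle between them. *)

theory Defs
  imports "HOL-Analysis.Analysis"
begin

definition dirderiv :: "('a::real_normed_vector \<Rightarrow> 'b::real_normed_vector) \<Rightarrow> 'a \<Rightarrow> 'a \<Rightarrow> 'b" where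
  "dirderiv f v x = vector_derivative (\<lambda>t::real. f (x + t *\<^sub>R v)) (at 0)"

fun iter_dd :: "'a::real_normed_vector list \<Rightarrow> ('a \<Rightarrow> 'b::real_normed_vector) \<Rightarrow> 'a \<Rightarrow> 'b" where
  "iter_dd [] f = f"
| "iter_dd (v # vs) f = dirderiv (iter_dd vs f) v"

definition smooth_on :: "'a::euclidean_space set \<Rightarrow> ('a \<Rightarrow> 'b::euclidean_space) \<Rightarrow> bool" where
  "smooth_on S f \<longleftrightarrow>
     (\<forall>vs. continuous_on S (iter_dd vs f) \<and>
           (\<forall>v. \<forall>x\<in>S. (\<lambda>t::real. iter_dd vs f (x + t *\<^sub>R v)) differentiable (at 0)))"

definition atlas_open :: "'p set \<Rightarrow> ('p set \<times> ('p \<Rightarrow> 'e::euclidean_space)) set \<Rightarrow> 'p set \<Rightarrow> bool" where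
  "atlas_open M A W \<longleftrightarrow> W \<subseteq> M \<and> (\<forall>(U,\<phi>)\<in>A. open (\<phi> ` (U \<inter> W)))"

definition manifold :: "'p set \<Rightarrow> ('p set \<times> ('p \<Rightarrow> 'e::euclidean_space)) set \<Rightarrow> bool" where
  "manifold M A \<longleftrightarrow>
     (\<forall>(U,\<phi>)\<in>A. U \<subseteq> M \<and> inj_on \<phi> U \<and> open (\<phi> ` U)) \<and>
     M = \<Union>(fst ` A) \<and>
     (\<forall>(U,\<phi>)\<in>A. \<forall>(V,\<theta>)\<in>A. open (\<phi> ` (U \<inter> V)) \<and>
                         smooth_on (\<phi> ` (U \<inter> V)) (\<theta> \<circ> inv_into U \<phi>)) \<and>
     (\<forall>x\<in>M. \<forall>y\<in>M. x \<noteq> y \<longrightarrow>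
        (\<exists>W1 W2. atlas_open M A W1 \<and> atlas_open M A W2 \<and> x \<in> W1 \<and> y \<in> W2 \<and> W1 \<inter> W2 = {})) \<and>
     (\<exists>A'\<subseteq>A. countable A' \<and> M = \<Union>(fst ` A'))"

definition smooth_map ::
  "'p set \<Rightarrow> ('p set \<times> ('p \<Rightarrow> 'e::euclidean_space)) set \<Rightarrow>
   'q set \<Rightarrow> ('q set \<times> ('q \<Rightarrow> 'f::euclidean_space)) set \<Rightarrow> ('p \<Rightarrow> 'q) \<Rightarrow> bool" where
  "smooth_map M A N B f \<longleftrightarrow>
     (\<forall>x\<in>M. f x \<in> N) \<and>
     (\<forall>(U,\<phi>)\<in>A. \<forall>(V,\<theta>)\<in>B. open (\<phi> ` (U \<inter> f -` V)) \<and>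
        smooth_on (\<phi> ` (U \<inter> f -` V)) (\<theta> \<circ> f \<circ> inv_into U \<phi>))"

definition submersion ::
  "'p set \<Rightarrow> ('p set \<times> ('p \<Rightarrow> 'e::euclidean_space)) set \<Rightarrow>
   'q set \<Rightarrow> ('q set \<times> ('q \<Rightarrow> 'f::euclidean_space)) set \<Rightarrow> ('p \<Rightarrow> 'q) \<Rightarrow> bool" where
  "submersion M A N B f \<longleftrightarrow> smooth_map M A N B f \<and>
     (\<forall>(U,\<phi>)\<in>A. \<forall>(V,\<theta>)\<in>B. \<forall>x\<in>U \<inter> f -` V.
        \<exists>D. ((\<theta> \<circ> f \<circ> inv_into U \<phi>) has_derivative D) (at (\<phi> x)) \<and> surj D)"

definition prod_atlas ::
  "('p set \<times> ('p \<Rightarrow> 'e::euclidean_space)) set \<Rightarrow> ('q set \<times> ('q \<Rightarrow> 'f::euclidean_space)) set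
   \<Rightarrow> (('p \<times> 'q) set \<times> ('p \<times> 'q \<Rightarrow> 'e \<times> 'f)) set" where
  "prod_atlas A B = {(U \<times> V, \<lambda>(x,y). (\<phi> x, \<theta> y)) | U \<phi> V \<theta>. (U,\<phi>) \<in> A \<and> (V,\<theta>) \<in> B}"

definition restrict_atlas :: "('p set \<times> ('p \<Rightarrow> 'e)) set \<Rightarrow> 'p set \<Rightarrow> ('p set \<times> ('p \<Rightarrow> 'e)) set" where
  "restrict_atlas A W = {(U \<inter> W, \<phi>) | U \<phi>. (U,\<phi>) \<in> A}"

text \<open>Smoothness of a map defined on a subset S of a manifold (used for maps on embedded
  submanifolds such as fibred products): locally the restriction of a smooth map on an open set.\<close>
definition smooth_on_subset ::
  "'p set \<Rightarrow> ('p set \<times> ('p \<Rightarrow> 'e::euclidean_space)) set \<Rightarrow> 'p set \<Rightarrow>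
   'q set \<Rightarrow> ('q set \<times> ('q \<Rightarrow> 'f::euclidean_space)) set \<Rightarrow> ('p \<Rightarrow> 'q) \<Rightarrow> bool" where
  "smooth_on_subset M A S N B f \<longleftrightarrow> S \<subseteq> M \<and>
     (\<forall>x\<in>S. \<exists>W F. atlas_open M A W \<and> x \<in> W \<and> smooth_map W (restrict_atlas A W) N B F \<and>
                  (\<forall>y\<in>S \<inter> W. F y = f y))"

definition diffeo_subsets ::
  "'p set \<Rightarrow> ('p set \<times> ('p \<Rightarrow> 'e::euclidean_space)) set \<Rightarrow> 'p set \<Rightarrow>
   'q set \<Rightarrow> ('q set \<times> ('q \<Rightarrow> 'f::euclidean_space)) set \<Rightarrow> 'q set \<Rightarrow> ('p \<Rightarrow> 'q) \<Rightarrow> bool" where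
  "diffeo_subsets M A S N B T f \<longleftrightarrow> bij_betw f S T \<and>
     smooth_on_subset M A S N B f \<and> smooth_on_subset N B T M A (inv_into S f)"

record ('g, 'o, 'eg, 'eo) groupoid_data =
  arr :: "'g set"
  obj :: "'o set"
  arr_atlas :: "('g set \<times> ('g \<Rightarrow> 'eg)) set"
  obj_atlas :: "('o set \<times> ('o \<Rightarrow> 'eo)) set"
  src :: "'g \<Rightarrow> 'o"
  tgt :: "'g \<Rightarrow> 'o"
  comp :: "'g \<Rightarrow> 'g \<Rightarrow> 'g"  \<comment> \<open>comp g1 g2 = g1 after g2, defined when src g1 = tgt g2\<close>
  ident :: "'o \<Rightarrow> 'g"

definition zpow :: "(real \<Rightarrow> real) \<Rightarrow> int \<Rightarrow> real \<Rightarrow> real" where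
  "zpow f k = (if k \<ge> 0 then f ^^ nat k else inv f ^^ nat (- k))"

definition Z_action_groupoid :: "(real \<Rightarrow> real) \<Rightarrow> (int \<times> real, real, real, real) groupoid_data" where
  "Z_action_groupoid f =
     \<lparr> arr = UNIV, obj = UNIV,
       arr_atlas = {({n} \<times> UNIV, snd) | n. True},
       obj_atlas = {(UNIV, id)},
       src = snd,
       tgt = (\<lambda>(k,x). zpow f k x),
       comp = (\<lambda>(k,y) (l,x). (k + l, x)),
       ident = (\<lambda>x. (0, x)) \<rparr>"

definition left_dom where
  "left_dom G P a = {(g,p). g \<in> arr G \<and> p \<in> P \<and> src G g = a p}"

definition right_dom where
  "right_dom H P a' = {(p,h). p \<in> P \<and> h \<in> arr H \<and> a' p = tgt H h}"

definition fibre_sq where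
  "fibre_sq P a = {(p,q). p \<in> P \<and> q \<in> P \<and> a p = a q}"

definition bibundle ::
  "('g, 'o, 'eg::euclidean_space, 'eo::euclidean_space) groupoid_data \<Rightarrow>
   ('h, 'q, 'eh::euclidean_space, 'eq::euclidean_space) groupoid_data \<Rightarrow>
   'p set \<Rightarrow> ('p set \<times> ('p \<Rightarrow> 'ep::euclidean_space)) set \<Rightarrow>
   ('p \<Rightarrow> 'o) \<Rightarrow> ('p \<Rightarrow> 'q) \<Rightarrow> ('g \<Rightarrow> 'p \<Rightarrow> 'p) \<Rightarrow> ('p \<Rightarrow> 'h \<Rightarrow> 'p) \<Rightarrow> bool" where
  "bibundle G H P AP a a' la ra \<longleftrightarrow>
     manifold P AP \<and>
     smooth_map P AP (obj G) (obj_atlas G) a \<and>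
     smooth_map P AP (obj H) (obj_atlas H) a' \<and>
     \<comment> \<open>left G-action along a\<close>
     smooth_on_subset (arr G \<times> P) (prod_atlas (arr_atlas G) AP) (left_dom G P a) P AP (case_prod la) \<and>
     (\<forall>(g,p)\<in>left_dom G P a. la g p \<in> P \<and> a (la g p) = tgt G g) \<and>
     (\<forall>p\<in>P. la (ident G (a p)) p = p) \<and>
     (\<forall>g1\<in>arr G. \<forall>g2\<in>arr G. \<forall>p\<in>P. src G g1 = tgt G g2 \<longrightarrow> src G g2 = a p \<longrightarrow>
        la (comp G g1 g2) p = la g1 (la g2 p)) \<and>
     \<comment> \<open>right H-action along a'\<close>
     smooth_on_subset (P \<times> arr H) (prod_atlas AP (arr_atlas H)) (right_dom H P a') P AP (case_prod ra) \<and>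
     (\<forall>(p,h)\<in>right_dom H P a'. ra p h \<in> P \<and> a' (ra p h) = src H h) \<and>
     (\<forall>p\<in>P. ra p (ident H (a' p)) = p) \<and>
     (\<forall>h1\<in>arr H. \<forall>h2\<in>arr H. \<forall>p\<in>P. src H h1 = tgt H h2 \<longrightarrow> a' p = tgt H h1 \<longrightarrow>
        ra p (comp H h1 h2) = ra (ra p h1) h2) \<and>
     \<comment> \<open>the actions commute\<close>
     (\<forall>(g,p)\<in>left_dom G P a. \<forall>h\<in>arr H. a' p = tgt H h \<longrightarrow> la g (ra p h) = ra (la g p) h) \<and>
     \<comment> \<open>a' is G-invariant\<close>
     (\<forall>(g,p)\<in>left_dom G P a. a' (la g p) = a' p) \<and>
     \<comment> \<open>a is a principal H-bundle\<close>
     (\<forall>(p,h)\<in>right_dom H P a'. a (ra p h) = a p) \<and>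
     a ` P = obj G \<and>
     submersion P AP (obj G) (obj_atlas G) a \<and>
     diffeo_subsets (P \<times> arr H) (prod_atlas AP (arr_atlas H)) (right_dom H P a')
                    (P \<times> P) (prod_atlas AP AP) (fibre_sq P a) (\<lambda>(p,h). (p, ra p h))"

text \<open>Invertible (biprincipal) bibundle: additionally a' is a principal G-bundle.\<close>
definition biprincipal_bibundle where
  "biprincipal_bibundle G H P AP a a' la ra \<longleftrightarrow>
     bibundle G H P AP a a' la ra \<and>
     a' ` P = obj H \<and>
     submersion P AP (obj H) (obj_atlas H) a' \<and>
     diffeo_subsets (arr G \<times> P) (prod_atlas (arr_atlas G) AP) (left_dom G P a)
                    (P \<times> P) (prod_atlas AP AP) (fibre_sq P a') (\<lambda>(g,p). (la g p, p))"

definition orbit where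
  "orbit G x = {tgt G g | g. g \<in> arr G \<and> src G g = x}"

definition lifts_identity where
  "lifts_identity G H P a a' \<longleftrightarrow> (\<forall>p\<in>P. orbit G (a p) = orbit H (a' p))"

end

theory Submission
  imports Defs
begin

lemma lip_of_deriv:
  fixes h h' :: "real \<Rightarrow> real"
  assumes hd: "\<And>x. (h has_real_derivative h' x) (at x)"
    and hc: "continuous_on UNIV h'"
  shows "\<exists>L\<ge>0. \<forall>u v. \<bar>u\<bar> \<le> R \<longrightarrow> \<bar>v\<bar> \<le> R \<longrightarrow> \<bar>h u - h v\<bar> \<le> L * \<bar>u - v\<bar>"
proof -
  have "compact (h' ` {-R..R})"
    by (rule compact_continuous_image) (auto intro: continuous_on_subset[OF hc])
  then obtain L0 where L0: "\<And>x. x \<in> {-R..R} \<Longrightarrow> \<bar>h' x\<bar> \<le> L0"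
    using compact_imp_bounded bounded_real by (metis image_eqI)
  define L where "L = max L0 0"
  have key: "\<bar>h v - h u\<bar> \<le> L * \<bar>v - u\<bar>" if "u < v" "\<bar>u\<bar> \<le> R" "\<bar>v\<bar> \<le> R" for u v
  proof -
    obtain z where z: "u < z" "z < v" "h v - h u = (v - u) * h' z"
      using MVT2[OF \<open>u < v\<close>, of h h'] hd by blast
    have "z \<in> {-R..R}" using z that by (auto simp: abs_le_iff)
    then have "\<bar>h' z\<bar> \<le> L" using L0[of z] unfolding L_def by auto
    then have "\<bar>(v - u) * h' z\<bar> \<le> \<bar>v - u\<bar> * L"
      by (simp add: abs_mult mult_left_mono)
    then show ?thesis using z by (simp add: mult.commute)
  qed
  have "\<forall>u v. \<bar>u\<bar> \<le> R \<longrightarrow> \<bar>v\<bar> \<le> R \<longrightarrow> \<bar>h u - h v\<bar> \<le> L * \<bar>u - v\<bar>"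
  proof (intro allI impI)
    fix u v :: real assume uv: "\<bar>u\<bar> \<le> R" "\<bar>v\<bar> \<le> R"
    consider "u < v" | "u = v" | "v < u" by linarith
    then show "\<bar>h u - h v\<bar> \<le> L * \<bar>u - v\<bar>"
    proof cases
      case 1 then show ?thesis using key[of u v] uv by (simp add: abs_minus_commute)
    next
      case 2 then show ?thesis by (simp add: L_def)
    next
      case 3 then show ?thesis using key[of v u] uv by simp
    qed
  qed
  then show ?thesis unfolding L_def by (intro exI[of _ "max L0 0"]) auto
qed

lemma ode_unique:
  fixes h z1 z2 :: "real \<Rightarrow> real"
  assumes lip: "\<And>R. \<exists>L\<ge>0. \<forall>u v. \<bar>u\<bar> \<le> R \<longrightarrow> \<bar>v\<bar> \<le> R \<longrightarrow> \<bar>h u - h v\<bar> \<le> L * \<bar>u - v\<bar>"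
    and d1: "\<And>t. (z1 has_real_derivative h (z1 t)) (at t)"
    and d2: "\<And>t. (z2 has_real_derivative h (z2 t)) (at t)"
    and init: "z1 t0 = z2 t0"
  shows "z1 t = z2 t"
proof -
  define a where "a = min t t0"
  define b where "b = max t t0"
  have c1: "continuous_on {a..b} z1" and c2: "continuous_on {a..b} z2"
    using d1 d2 by (auto intro!: continuous_at_imp_continuous_on DERIV_isCont)
  have "compact (z1 ` {a..b})" "compact (z2 ` {a..b})"
    using c1 c2 by (auto intro: compact_continuous_image)
  then obtain R1 R2 where R1: "\<And>s. s \<in> {a..b} \<Longrightarrow> \<bar>z1 s\<bar> \<le> R1" and R2: "\<And>s. s \<in> {a..b} \<Longrightarrow> \<bar>z2 s\<bar> \<le> R2"
    using compact_imp_bounded bounded_real by (metis image_eqI)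
  obtain L where L: "L \<ge> 0" "\<forall>u v. \<bar>u\<bar> \<le> max R1 R2 \<longrightarrow> \<bar>v\<bar> \<le> max R1 R2 \<longrightarrow> \<bar>h u - h v\<bar> \<le> L * \<bar>u - v\<bar>"
    using lip by blast
  define w where "w = (\<lambda>s. (z1 s - z2 s)^2)"
  define w' where "w' = (\<lambda>s. 2 * (z1 s - z2 s) * (h (z1 s) - h (z2 s)))"
  have dw: "(w has_real_derivative w' s) (at s)" for s
    unfolding w_def w'_def
    by (auto intro!: derivative_eq_intros d1 d2 simp: power2_eq_square)
  have bw: "\<bar>w' s\<bar> \<le> 2 * L * w s" if "s \<in> {a..b}" for s
  proof -
    have "\<bar>h (z1 s) - h (z2 s)\<bar> \<le> L * \<bar>z1 s - z2 s\<bar>"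
      using L(2) R1[OF that] R2[OF that] by auto
    then have "\<bar>z1 s - z2 s\<bar> * \<bar>h (z1 s) - h (z2 s)\<bar> \<le> \<bar>z1 s - z2 s\<bar> * (L * \<bar>z1 s - z2 s\<bar>)"
      by (simp add: mult_left_mono)
    then have "\<bar>w' s\<bar> \<le> 2 * (\<bar>z1 s - z2 s\<bar> * (L * \<bar>z1 s - z2 s\<bar>))"
    proof -
      have "w' s = 2 * ((z1 s - z2 s) * (h (z1 s) - h (z2 s)))" by (simp add: w'_def)
      then have "\<bar>w' s\<bar> = 2 * (\<bar>z1 s - z2 s\<bar> * \<bar>h (z1 s) - h (z2 s)\<bar>)"
        by (simp only: abs_mult)
      then show ?thesis using \<open>\<bar>z1 s - z2 s\<bar> * \<bar>h (z1 s) - h (z2 s)\<bar> \<le> _\<close> by simp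
    qed
    also have "\<dots> = 2 * L * w s" unfolding w_def
      by (simp add: power2_eq_square abs_mult_self_eq algebra_simps flip: abs_mult)
    finally show ?thesis .
  qed
  have w0: "w t0 = 0" using init by (simp add: w_def)
  have wnn: "w s \<ge> 0" for s by (simp add: w_def)
  have "w t = 0"
  proof (cases "t0 \<le> t")
    case True
    define g where "g = (\<lambda>s. exp (- (2 * L) * s) * w s)"
    have "g t \<le> g t0"
    proof (rule DERIV_nonpos_imp_nonincreasing[OF True])
      fix x assume x: "t0 \<le> x" "x \<le> t"
      then have xab: "x \<in> {a..b}" unfolding a_def b_def by auto
      have "(g has_real_derivative exp (- (2 * L) * x) * (- (2 * L)) * w x + exp (- (2 * L) * x) * w' x) (at x)"
        unfolding g_def by (auto intro!: derivative_eq_intros dw)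
      moreover have "exp (- (2 * L) * x) * (- (2 * L)) * w x + exp (- (2 * L) * x) * w' x \<le> 0"
      proof -
        have "w' x - 2 * L * w x \<le> 0" using bw[OF xab] by linarith
        then have "exp (- (2 * L) * x) * (w' x - 2 * L * w x) \<le> 0"
          by (simp add: mult_nonneg_nonpos)
        then show ?thesis by (simp add: algebra_simps)
      qed
      ultimately show "\<exists>y. DERIV g x :> y \<and> y \<le> 0" by blast
    qed
    then have "exp (- (2 * L) * t) * w t \<le> 0" using w0 unfolding g_def by simp
    then show ?thesis using wnn[of t] by (simp add: mult_le_0_iff)
  next
    case False
    then have le: "t \<le> t0" by simp
    define g where "g = (\<lambda>s. exp ((2 * L) * s) * w s)"
    have "g t \<le> g t0"
    proof (rule DERIV_nonneg_imp_nondecreasing[OF le])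
      fix x assume x: "t \<le> x" "x \<le> t0"
      then have xab: "x \<in> {a..b}" unfolding a_def b_def by auto
      have "(g has_real_derivative exp ((2 * L) * x) * (2 * L) * w x + exp ((2 * L) * x) * w' x) (at x)"
        unfolding g_def by (auto intro!: derivative_eq_intros dw)
      moreover have "exp ((2 * L) * x) * (2 * L) * w x + exp ((2 * L) * x) * w' x \<ge> 0"
      proof -
        have "w' x + 2 * L * w x \<ge> 0" using bw[OF xab] by linarith
        then have "exp ((2 * L) * x) * (w' x + 2 * L * w x) \<ge> 0"
          by simp
        then show ?thesis by (simp add: algebra_simps)
      qed
      ultimately show "\<exists>y. DERIV g x :> y \<and> y \<ge> 0" by blast
    qed
    then have "exp ((2 * L) * t) * w t \<le> 0" using w0 unfolding g_def by simp
    then show ?thesis using wnn[of t] by (simp add: mult_le_0_iff)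
  qed
  then show ?thesis unfolding w_def by simp
qed

lemma flow_facts:
  fixes h :: "real \<Rightarrow> real" and \<phi> :: "real \<Rightarrow> real \<Rightarrow> real"
  assumes h_smooth: "\<forall>n x. ((deriv ^^ n) h) differentiable (at x)"
    and h_flat: "\<forall>n. ((deriv ^^ n) h) 0 = 0"
    and h_pos: "\<forall>x. x \<noteq> 0 \<longrightarrow> h x > 0"
    and flow_init: "\<forall>x. \<phi> 0 x = x"
    and flow_ode: "\<forall>t x. ((\<lambda>s. \<phi> s x) has_real_derivative h (\<phi> t x)) (at t)"
  shows "\<phi> t 0 = 0" "\<phi> s (\<phi> t x) = \<phi> (s + t) x"
    "x > 0 \<Longrightarrow> \<phi> t x > 0" "x < 0 \<Longrightarrow> \<phi> t x < 0"
    "x \<noteq> 0 \<Longrightarrow> \<phi> 1 x > x"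
proof -
  have h0: "h 0 = 0" using h_flat[rule_format, of 0] by simp
  have hd: "(h has_real_derivative deriv h x) (at x)" for x
    using h_smooth[rule_format, of 0] by (simp add: DERIV_deriv_iff_real_differentiable)
  have "continuous_on UNIV (deriv h)"
    using h_smooth[rule_format, of 1]
    by (auto intro!: continuous_at_imp_continuous_on differentiable_imp_continuous_within)
  note lip = lip_of_deriv[OF hd this]
  have fo: "((\<lambda>s. \<phi> s x) has_real_derivative h (\<phi> t x)) (at t)" for t x
    using flow_ode by blast
  show f0: "\<phi> t 0 = 0" for t
    using ode_unique[OF lip, of "\<lambda>s. \<phi> s 0" "\<lambda>s. 0" 0 t] fo flow_init h0 by auto
  show grp: "\<phi> s (\<phi> t x) = \<phi> (s + t) x" for s t x
  proof -
    have d2: "((\<lambda>s. \<phi> (s + t) x) has_real_derivative h (\<phi> (s' + t) x)) (at s')" for s'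
      using fo[where t="s' + t" and x=x] by (simp add: DERIV_shift)
    show ?thesis
      using ode_unique[OF lip, of "\<lambda>s. \<phi> s (\<phi> t x)" "\<lambda>s. \<phi> (s + t) x" 0 s] fo d2 flow_init by auto
  qed
  have nz: "\<phi> t x \<noteq> 0" if "x \<noteq> 0" for t x
  proof
    assume "\<phi> t x = 0"
    then have "\<phi> (-t) (\<phi> t x) = 0" using f0 by simp
    then show False using grp[of "-t" t x] flow_init that by simp
  qed
  have cont: "continuous_on A (\<lambda>s. \<phi> s x)" for A x
    using fo by (auto intro!: continuous_at_imp_continuous_on DERIV_isCont)
  show "\<phi> t x > 0" if "x > 0" for t x
  proof (rule ccontr)
    assume "\<not> \<phi> t x > 0"
    then have le: "\<phi> t x \<le> 0" by simp
    have "\<exists>s. min 0 t \<le> s \<and> s \<le> max 0 t \<and> \<phi> s x = 0"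
    proof (cases "0 \<le> t")
      case True
      then show ?thesis using IVT2'[of "\<lambda>s. \<phi> s x" t 0 0] le flow_init that cont by force
    next
      case False
      then show ?thesis using IVT'[of "\<lambda>s. \<phi> s x" t 0 0] le flow_init that cont by force
    qed
    then show False using nz that by force
  qed
  show "\<phi> t x < 0" if "x < 0" for t x
  proof (rule ccontr)
    assume "\<not> \<phi> t x < 0"
    then have le: "\<phi> t x \<ge> 0" by simp
    have "\<exists>s. min 0 t \<le> s \<and> s \<le> max 0 t \<and> \<phi> s x = 0"
    proof (cases "0 \<le> t")
      case True
      then show ?thesis using IVT'[of "\<lambda>s. \<phi> s x" 0 0 t] le flow_init that cont by force
    next
      case False
      then show ?thesis using IVT2'[of "\<lambda>s. \<phi> s x" 0 0 t] le flow_init that cont by force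
    qed
    then show False using nz that by force
  qed
  show "\<phi> 1 x > x" if "x \<noteq> 0"
  proof -
    have hnn: "h y \<ge> 0" for y using h_pos h0 by (cases "y = 0") (auto intro: less_imp_le)
    have hx: "h (\<phi> 0 x) > 0" using h_pos that flow_init by auto
    obtain d where d: "d > 0" "\<forall>e>0. e < d \<longrightarrow> \<phi> 0 x < \<phi> (0 + e) x"
      using DERIV_pos_inc_right[OF fo[where t=0 and x=x] hx] by auto
    define e where "e = min (d/2) 1"
    have e: "e > 0" "e < d" "e \<le> 1" using d unfolding e_def by auto
    have "\<phi> e x \<le> \<phi> 1 x"
      by (rule DERIV_nonneg_imp_nondecreasing[OF e(3)]) (use fo hnn in blast)
    moreover have "x < \<phi> e x" using d e flow_init by auto
    ultimately show ?thesis by simp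
  qed
qed

lemma iter_up:
  fixes f :: "real \<Rightarrow> real"
  assumes "\<forall>y. P y \<longrightarrow> P (f y) \<and> y < f y" "P y"
  shows "P ((f^^n) y) \<and> (n > 0 \<longrightarrow> y < (f^^n) y)"
proof (induction n)
  case 0 then show ?case using assms by simp
next
  case (Suc n)
  then have a: "P ((f^^n) y)" "n > 0 \<longrightarrow> y < (f^^n) y" by auto
  have b: "P (f ((f^^n) y))" "(f^^n) y < f ((f^^n) y)" using assms(1) a(1) by auto
  have "y \<le> (f^^n) y" using a(2) by (cases n) (auto simp del: funpow.simps)
  then show ?case using b by auto
qed

lemma iter_down:
  fixes f :: "real \<Rightarrow> real"
  assumes "\<forall>y. P y \<longrightarrow> P (f y) \<and> f y < y" "P y"
  shows "P ((f^^n) y) \<and> (n > 0 \<longrightarrow> (f^^n) y < y)"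
proof (induction n)
  case 0 then show ?case using assms by simp
next
  case (Suc n)
  then have a: "P ((f^^n) y)" "n > 0 \<longrightarrow> (f^^n) y < y" by auto
  have b: "P (f ((f^^n) y))" "f ((f^^n) y) < (f^^n) y" using assms(1) a(1) by auto
  have "(f^^n) y \<le> y" using a(2) by (cases n) (auto simp del: funpow.simps)
  then show ?case using b by auto
qed

lemma iter_fix:
  fixes f :: "real \<Rightarrow> real"
  assumes "f 0 = 0"
  shows "(f^^n) 0 = 0"
  using assms by (induction n) auto

lemma psih_facts:
  fixes \<psi> \<psi>i \<psi>h :: "real \<Rightarrow> real"
  assumes inv1: "\<And>x. \<psi> (\<psi>i x) = x" and inv2: "\<And>x. \<psi>i (\<psi> x) = x"
    and z: "\<psi> 0 = 0"
    and pos: "\<And>x. x > 0 \<Longrightarrow> \<psi> x > 0" "\<And>x. x > 0 \<Longrightarrow> \<psi>i x > 0"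
    and neg: "\<And>x. x < 0 \<Longrightarrow> \<psi> x < 0" "\<And>x. x < 0 \<Longrightarrow> \<psi>i x < 0"
    and up: "\<And>x. x \<noteq> 0 \<Longrightarrow> \<psi> x > x"
    and psih_def: "\<psi>h = (\<lambda>x. if x \<ge> 0 then \<psi> x else inv \<psi> x)"
  shows "zpow \<psi> 1 = \<psi>" "zpow \<psi>h 0 y = y" "zpow \<psi>h m 0 = 0"
    "m \<noteq> 0 \<Longrightarrow> ((\<forall>y>0. zpow \<psi>h m y > y) \<and> (\<forall>y<0. zpow \<psi>h m y < y)) \<or>
                 ((\<forall>y>0. zpow \<psi>h m y < y) \<and> (\<forall>y<0. zpow \<psi>h m y > y))"
proof -
  have zi: "\<psi>i 0 = 0" using inv2[of 0] z by simp
  have ip: "inv \<psi> = \<psi>i" by (rule inv_equality) (use inv1 inv2 in auto)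
  define \<psi>hi where "\<psi>hi = (\<lambda>x. if x \<ge> 0 then \<psi>i x else \<psi> x)"
  have psih: "\<psi>h = (\<lambda>x. if x \<ge> 0 then \<psi> x else \<psi>i x)" by (simp only: psih_def ip)
  have ge0: "x \<ge> 0 \<Longrightarrow> \<psi> x \<ge> 0" "x \<ge> 0 \<Longrightarrow> \<psi>i x \<ge> 0" for x
    using pos z zi by (auto simp: le_less)
  have ihp: "inv \<psi>h = \<psi>hi"
  proof (rule inv_equality)
    fix x show "\<psi>hi (\<psi>h x) = x"
    proof (cases "x \<ge> 0")
      case True then show ?thesis using ge0(1)[OF True] inv2 by (simp add: psih \<psi>hi_def)
    next
      case False then have "\<psi>i x < 0" using neg(2) by simp
      then show ?thesis using False inv1 by (simp add: psih \<psi>hi_def)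
    qed
  next
    fix y show "\<psi>h (\<psi>hi y) = y"
    proof (cases "y \<ge> 0")
      case True then show ?thesis using ge0(2)[OF True] inv1 by (simp add: psih \<psi>hi_def)
    next
      case False then have "\<psi> y < 0" using neg(1) by simp
      then show ?thesis using False inv2 by (simp add: psih \<psi>hi_def)
    qed
  qed
  show "zpow \<psi> 1 = \<psi>" by (simp add: zpow_def)
  show "zpow \<psi>h 0 y = y" by (simp add: zpow_def)
  have h0: "\<psi>h 0 = 0" "\<psi>hi 0 = 0" using z zi psih \<psi>hi_def by auto
  show "zpow \<psi>h m 0 = 0" unfolding zpow_def ihp using iter_fix[of \<psi>h, OF h0(1)] iter_fix[of \<psi>hi, OF h0(2)] by simp
  have dn: "x \<noteq> 0 \<Longrightarrow> \<psi>i x < x" for x using up[of "\<psi>i x"] inv1[of x] zi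
    by (metis inv1)
  have A1: "\<forall>y. y > 0 \<longrightarrow> \<psi>h y > 0 \<and> y < \<psi>h y" using psih pos up by auto
  have A2: "\<forall>y. y < 0 \<longrightarrow> \<psi>h y < 0 \<and> \<psi>h y < y" using psih neg dn by auto
  have B1: "\<forall>y. y > 0 \<longrightarrow> \<psi>hi y > 0 \<and> \<psi>hi y < y" using \<psi>hi_def pos dn by auto
  have B2: "\<forall>y. y < 0 \<longrightarrow> \<psi>hi y < 0 \<and> y < \<psi>hi y" using \<psi>hi_def neg up by auto
  assume m: "m \<noteq> 0"
  show "((\<forall>y>0. zpow \<psi>h m y > y) \<and> (\<forall>y<0. zpow \<psi>h m y < y)) \<or>
                 ((\<forall>y>0. zpow \<psi>h m y < y) \<and> (\<forall>y<0. zpow \<psi>h m y > y))"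
  proof (cases "m > 0")
    case True
    then have "nat m > 0" by simp
    then show ?thesis
      using iter_up[of "\<lambda>y. y > 0" \<psi>h, OF A1] iter_down[of "\<lambda>y. y < 0" \<psi>h, OF A2] True
      unfolding zpow_def by auto
  next
    case False
    then have "nat (-m) > 0" using m by simp
    then show ?thesis
      using iter_down[of "\<lambda>y. y > 0" \<psi>hi, OF B1] iter_up[of "\<lambda>y. y < 0" \<psi>hi, OF B2] False
      unfolding zpow_def ihp by auto
  qed
qed

lemma cont_inj_strict:
  fixes f :: "real \<Rightarrow> real"
  assumes c: "continuous_on {a..b} f" and i: "inj_on f {a..b}" and ab: "f a < f b"
    and xy: "x \<in> {a..b}" "y \<in> {a..b}" "x < y"
  shows "f x < f y"
proof -
  have mid: "f a < f z \<and> f z < f b" if "a < z" "z < b" for z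
    using continuous_inj_imp_mono[OF that c i] ab by auto
  show ?thesis
  proof (cases "x = a")
    case True
    then show ?thesis using xy mid[of y] ab by (cases "y = b") auto
  next
    case False
    then have ax: "a < x" using xy by auto
    have xb: "x < b" using xy by auto
    have fx: "f a < f x" "f x < f b" using mid[OF ax xb] by auto
    show ?thesis
    proof (cases "y = b")
      case True then show ?thesis using fx by simp
    next
      case False
      then have yb: "y < b" using xy by auto
      have "continuous_on {a..y} f" using c yb by (auto intro: continuous_on_subset)
      moreover have "inj_on f {a..y}" using i yb by (auto intro: inj_on_subset)
      ultimately have "(f a < f x \<and> f x < f y) \<or> (f y < f x \<and> f x < f a)"
        using continuous_inj_imp_mono[OF ax \<open>x < y\<close>] by blast
      then show ?thesis using fx by auto
    qed
  qed
qed

lemma cont_inj_dir: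
  fixes f :: "real \<Rightarrow> real"
  assumes c: "continuous_on {a..b} f" and i: "inj_on f {a..b}" and ab: "a < b"
  shows "\<forall>x\<in>{a..b}. \<forall>y\<in>{a..b}. x < y \<longrightarrow> (if f a < f b then f x < f y else f y < f x)"
proof (intro ballI impI)
  fix x y assume xy: "x \<in> {a..b}" "y \<in> {a..b}" "x < y"
  have "f a \<noteq> f b" using i ab by (auto dest: inj_onD)
  show "if f a < f b then f x < f y else f y < f x"
  proof (cases "f a < f b")
    case True then show ?thesis using cont_inj_strict[OF c i True xy] by simp
  next
    case False
    then have "- f a < - f b" using \<open>f a \<noteq> f b\<close> by auto
    moreover have "continuous_on {a..b} (\<lambda>x. - f x)" using c by (intro continuous_intros)
    moreover have "inj_on (\<lambda>x. - f x) {a..b}" using i by (auto simp: inj_on_def)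
    ultimately have "- f x < - f y" using cont_inj_strict[of a b "\<lambda>x. - f x", OF _ _ _ xy] by blast
    then show ?thesis using False by simp
  qed
qed

lemma final_contra:
  fixes \<alpha> \<beta> \<psi> S :: "real \<Rightarrow> real"
  assumes \<delta>: "\<delta> > 0"
    and ca: "continuous_on {-\<delta>..\<delta>} \<alpha>" and cb: "continuous_on {-\<delta>..\<delta>} \<beta>"
    and ia: "inj_on \<alpha> {-\<delta>..\<delta>}" and ib: "inj_on \<beta> {-\<delta>..\<delta>}"
    and a0: "\<alpha> 0 = 0" and b0: "\<beta> 0 = 0"
    and up: "\<forall>x. x \<noteq> 0 \<longrightarrow> x < \<psi> x"
    and Smv: "((\<forall>y>0. S y > y) \<and> (\<forall>y<0. S y < y)) \<or> ((\<forall>y>0. S y < y) \<and> (\<forall>y<0. S y > y))"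
    and H\<psi>: "\<forall>\<epsilon>>0. \<exists>d>0. \<forall>t. \<bar>t\<bar> < d \<longrightarrow> \<bar>\<psi> (\<alpha> t)\<bar> < \<epsilon>"
    and Hc: "\<exists>d>0. \<forall>t t'. \<bar>t\<bar> < d \<longrightarrow> \<bar>t'\<bar> \<le> \<delta> \<longrightarrow> \<alpha> t' = \<psi> (\<alpha> t) \<longrightarrow> \<beta> t' = S (\<beta> t)"
  shows False
proof -
  define I where "I = {-\<delta>..\<delta>}"
  have lt: "-\<delta> < \<delta>" using \<delta> by simp
  note da = cont_inj_dir[OF ca ia lt, folded I_def]
  note db = cont_inj_dir[OF cb ib lt, folded I_def]
  define ia' where "ia' = (\<alpha> (-\<delta>) < \<alpha> \<delta>)"
  define ib' where "ib' = (\<beta> (-\<delta>) < \<beta> \<delta>)"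
  have I0: "0 \<in> I" "-\<delta> \<in> I" "\<delta> \<in> I" using \<delta> by (auto simp: I_def)
  have sa: "if ia' then \<alpha> (-\<delta>) < 0 \<and> 0 < \<alpha> \<delta> else \<alpha> \<delta> < 0 \<and> 0 < \<alpha> (-\<delta>)"
    using da[rule_format, OF I0(2) I0(1)] da[rule_format, OF I0(1) I0(3)] \<delta> a0 unfolding ia'_def
    by (auto split: if_splits)
  define e where "e = min \<bar>\<alpha> (-\<delta>)\<bar> \<bar>\<alpha> \<delta>\<bar>"
  have e: "e > 0" using sa unfolding e_def by (auto split: if_splits)
  obtain d1 where d1: "d1 > 0" "\<forall>t. \<bar>t\<bar> < d1 \<longrightarrow> \<bar>\<psi> (\<alpha> t)\<bar> < e" using H\<psi> e by blast
  obtain d2 where d2: "d2 > 0" "\<forall>t t'. \<bar>t\<bar> < d2 \<longrightarrow> \<bar>t'\<bar> \<le> \<delta> \<longrightarrow> \<alpha> t' = \<psi> (\<alpha> t) \<longrightarrow> \<beta> t' = S (\<beta> t)"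
    using Hc by blast
  define d where "d = min (min d1 d2) \<delta> / 2"
  have d: "d > 0" "d < d1" "d < d2" "d < \<delta>" using d1 d2 \<delta> unfolding d_def by auto
  have key: "\<beta> t < S (\<beta> t) \<longleftrightarrow> (ia' \<longleftrightarrow> ib')" if t: "t = d \<or> t = -d" for t
  proof -
    have tI: "t \<in> I" and t0: "t \<noteq> 0" and t1: "\<bar>t\<bar> < d1" and t2: "\<bar>t\<bar> < d2"
      using t d unfolding I_def by auto
    have ps: "\<bar>\<psi> (\<alpha> t)\<bar> < e" using d1 t1 by auto
    have "\<exists>t'. -\<delta> \<le> t' \<and> t' \<le> \<delta> \<and> \<alpha> t' = \<psi> (\<alpha> t)"
    proof (cases ia')
      case True
      then show ?thesis using IVT'[of \<alpha> "-\<delta>" "\<psi> (\<alpha> t)" \<delta>] sa ps ca lt unfolding e_def by auto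
    next
      case False
      then show ?thesis using IVT2'[of \<alpha> \<delta> "\<psi> (\<alpha> t)" "-\<delta>"] sa ps ca lt unfolding e_def by auto
    qed
    then obtain t' where t': "t' \<in> I" "\<alpha> t' = \<psi> (\<alpha> t)" unfolding I_def by auto
    have at0: "\<alpha> t \<noteq> 0" using ia t0 tI I0 a0 unfolding I_def by (metis inj_onD)
    have "\<alpha> t < \<alpha> t'" using up at0 t' by auto
    then have tt: "t < t' \<longleftrightarrow> ia'"
      using da[rule_format, OF tI t'(1)] da[rule_format, OF t'(1) tI] unfolding ia'_def
      by (cases "t < t'"; cases "t' < t") (auto split: if_splits)
    have "t' \<noteq> t" using \<open>\<alpha> t < \<alpha> t'\<close> by auto
    have bt: "\<beta> t' = S (\<beta> t)" using d2(2) t2 t' unfolding I_def by auto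
    have "\<beta> t < \<beta> t' \<longleftrightarrow> (t < t' \<longleftrightarrow> ib')"
      using db[rule_format, OF tI t'(1)] db[rule_format, OF t'(1) tI] \<open>t' \<noteq> t\<close> unfolding ib'_def
      by (cases "t < t'"; cases "t' < t") (auto split: if_splits)
    then show ?thesis using tt bt by auto
  qed
  have dI: "d \<in> I" "-d \<in> I" using d unfolding I_def by auto
  have sb: "if ib' then \<beta> (-d) < 0 \<and> 0 < \<beta> d else \<beta> d < 0 \<and> 0 < \<beta> (-d)"
    using db[rule_format, OF dI(2) I0(1)] db[rule_format, OF I0(1) dI(1)] d b0 unfolding ib'_def
    by (auto split: if_splits)
  have k: "(\<beta> d < S (\<beta> d)) = (\<beta> (-d) < S (\<beta> (-d)))" using key[of d] key[of "-d"] by simp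
  from Smv show False
  proof (elim disjE conjE)
    assume A1: "\<forall>y>0. S y > y" and A2: "\<forall>y<0. S y < y"
    show False
    proof (cases ib')
      case True then show ?thesis using sb k A1[rule_format, of "\<beta> d"] A2[rule_format, of "\<beta> (-d)"] by auto
    next
      case False then show ?thesis using sb k A2[rule_format, of "\<beta> d"] A1[rule_format, of "\<beta> (-d)"] by auto
    qed
  next
    assume A1: "\<forall>y>0. S y < y" and A2: "\<forall>y<0. S y > y"
    show False
    proof (cases ib')
      case True then show ?thesis using sb k A1[rule_format, of "\<beta> d"] A2[rule_format, of "\<beta> (-d)"] by auto
    next
      case False then show ?thesis using sb k A2[rule_format, of "\<beta> d"] A1[rule_format, of "\<beta> (-d)"] by auto
    qed
  qed
qed

lemma dist_pair_le: "dist (a, b) (c, d) \<le> dist a c + dist b d"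
proof -
  have "sqrt ((dist a c)\<^sup>2 + (dist b d)\<^sup>2) \<le> sqrt ((dist a c + dist b d)\<^sup>2)"
    by (rule real_sqrt_le_mono) (simp add: power2_eq_square algebra_simps)
  then show ?thesis by (simp add: dist_Pair_Pair)
qed

lemma smooth_on_cont: "smooth_on S f \<Longrightarrow> continuous_on S f"
  unfolding smooth_on_def using iter_dd.simps(1) by metis

lemma sos_cont:
  fixes f :: "'p \<Rightarrow> 'q" and A :: "('p set \<times> ('p \<Rightarrow> 'e::euclidean_space)) set"
    and B :: "('q set \<times> ('q \<Rightarrow> 'f::euclidean_space)) set"
  assumes sos: "smooth_on_subset M A S N B f" and x0: "x0 \<in> S" and Ua: "(Ua, \<phi>a) \<in> A" "x0 \<in> Ua"
    and inj: "inj_on \<phi>a Ua" and V: "(V, \<theta>) \<in> B" "f x0 \<in> V" and \<eta>: "\<eta> > 0"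
  shows "\<exists>\<epsilon>>0. \<forall>x\<in>S \<inter> Ua. dist (\<phi>a x) (\<phi>a x0) < \<epsilon> \<longrightarrow> f x \<in> V \<and> dist (\<theta> (f x)) (\<theta> (f x0)) < \<eta>"
proof -
  obtain W F where W: "atlas_open M A W" "x0 \<in> W" "smooth_map W (restrict_atlas A W) N B F"
    "\<forall>y\<in>S \<inter> W. F y = f y"
    using sos x0 unfolding smooth_on_subset_def by blast
  have ch: "(Ua \<inter> W, \<phi>a) \<in> restrict_atlas A W" using Ua unfolding restrict_atlas_def by blast
  define O' where "O' = \<phi>a ` (Ua \<inter> W \<inter> F -` V)"
  define g where "g = \<theta> \<circ> F \<circ> inv_into (Ua \<inter> W) \<phi>a"
  have oO: "open O'" and sg: "smooth_on O' g"
    using W(3) ch V(1) unfolding smooth_map_def O'_def g_def by fastforce+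
  have Fx0: "F x0 = f x0" using W(4) x0 W(2) by auto
  have x0O: "\<phi>a x0 \<in> O'" unfolding O'_def using Ua W(2) Fx0 V(2) by auto
  have "isCont g (\<phi>a x0)"
    using smooth_on_cont[OF sg] oO x0O continuous_on_eq_continuous_at by blast
  then obtain e1 where e1: "e1 > 0" "\<forall>y. dist y (\<phi>a x0) < e1 \<longrightarrow> dist (g y) (g (\<phi>a x0)) < \<eta>"
    unfolding continuous_at_eps_delta using \<eta> by blast
  obtain e2 where e2: "e2 > 0" "ball (\<phi>a x0) e2 \<subseteq> O'" using oO x0O open_contains_ball by blast
  have inj2: "inj_on \<phi>a (Ua \<inter> W)" using inj by (rule inj_on_subset) auto
  have gx: "g (\<phi>a x) = \<theta> (F x)" if "x \<in> Ua \<inter> W" for x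
    unfolding g_def using inv_into_f_f[OF inj2 that] by simp
  show ?thesis
  proof (intro exI[of _ "min e1 e2"] conjI ballI impI)
    show "min e1 e2 > 0" using e1 e2 by simp
    fix x assume x: "x \<in> S \<inter> Ua" and dx: "dist (\<phi>a x) (\<phi>a x0) < min e1 e2"
    then have "\<phi>a x \<in> O'" using e2 by (auto simp: dist_commute)
    then obtain x' where x': "x' \<in> Ua \<inter> W \<inter> F -` V" "\<phi>a x' = \<phi>a x" unfolding O'_def by auto
    then have "x' = x" using inj x by (auto dest: inj_onD)
    then have xW: "x \<in> Ua \<inter> W" "F x \<in> V" using x' by auto
    have Fx: "F x = f x" using W(4) x xW by auto
    show "f x \<in> V" using xW Fx by simp
    have "dist (g (\<phi>a x)) (g (\<phi>a x0)) < \<eta>" using e1 dx by auto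
    then show "dist (\<theta> (f x)) (\<theta> (f x0)) < \<eta>"
      using gx[OF xW(1)] gx[of x0] Ua W(2) Fx Fx0 by simp
  qed
qed

theorem proposition7:
  fixes h :: "real \<Rightarrow> real"
    and \<phi> :: "real \<Rightarrow> real \<Rightarrow> real"
    and \<psi> \<psi>h :: "real \<Rightarrow> real"
    and P :: "'p set" and AP :: "('p set \<times> ('p \<Rightarrow> 'e::euclidean_space)) set"
    and a a' :: "'p \<Rightarrow> real"
    and la :: "int \<times> real \<Rightarrow> 'p \<Rightarrow> 'p" and ra :: "'p \<Rightarrow> int \<times> real \<Rightarrow> 'p"
  assumes h_smooth: "\<forall>n x. ((deriv ^^ n) h) differentiable (at x)"
    and h_flat: "\<forall>n. ((deriv ^^ n) h) 0 = 0"
    and h_pos: "\<forall>x. x \<noteq> 0 \<longrightarrow> h x > 0"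
    and flow_init: "\<forall>x. \<phi> 0 x = x"
    and flow_ode: "\<forall>t x. ((\<lambda>s. \<phi> s x) has_real_derivative h (\<phi> t x)) (at t)"
    and psi_def: "\<psi> = \<phi> 1"
    and psih_def: "\<psi>h = (\<lambda>x. if x \<ge> 0 then \<psi> x else inv \<psi> x)"
  shows "\<not> (biprincipal_bibundle (Z_action_groupoid \<psi>) (Z_action_groupoid \<psi>h) P AP a a' la ra
             \<and> lifts_identity (Z_action_groupoid \<psi>) (Z_action_groupoid \<psi>h) P a a')
       \<and> \<not> biprincipal_bibundle (Z_action_groupoid \<psi>) (Z_action_groupoid \<psi>h) P AP a a' la ra"
proof -
  note ff = flow_facts[OF h_smooth h_flat h_pos flow_init flow_ode]
  define \<psi>i where "\<psi>i = \<phi> (-1)"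
  have inv1: "\<psi> (\<psi>i x) = x" for x unfolding psi_def \<psi>i_def using ff(2)[of 1 "-1" x] flow_init by simp
  have inv2: "\<psi>i (\<psi> x) = x" for x unfolding psi_def \<psi>i_def using ff(2)[of "-1" 1 x] flow_init by simp
  have z: "\<psi> 0 = 0" unfolding psi_def using ff(1) by simp
  have pos: "\<And>x. x > 0 \<Longrightarrow> \<psi> x > 0" "\<And>x. x > 0 \<Longrightarrow> \<psi>i x > 0"
    unfolding psi_def \<psi>i_def using ff(3) by auto
  have neg: "\<And>x. x < 0 \<Longrightarrow> \<psi> x < 0" "\<And>x. x < 0 \<Longrightarrow> \<psi>i x < 0"
    unfolding psi_def \<psi>i_def using ff(4) by auto
  have up: "\<And>x. x \<noteq> 0 \<Longrightarrow> \<psi> x > x" unfolding psi_def using ff(5) by auto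
  have pf1: "zpow \<psi> 1 = \<psi>"
    by (rule psih_facts(1)[of \<psi> \<psi>i \<psi>h]) (simp_all add: inv1 inv2 z pos neg up psih_def)
  have pf2: "zpow \<psi>h 0 y = y" for y
    by (rule psih_facts(2)[of \<psi> \<psi>i \<psi>h]) (simp_all add: inv1 inv2 z pos neg up psih_def)
  have pf3: "zpow \<psi>h m 0 = 0" for m
    by (rule psih_facts(3)[of \<psi> \<psi>i \<psi>h]) (simp_all add: inv1 inv2 z pos neg up psih_def)
  have pf4: "((\<forall>y>0. zpow \<psi>h m y > y) \<and> (\<forall>y<0. zpow \<psi>h m y < y)) \<or>
                 ((\<forall>y>0. zpow \<psi>h m y < y) \<and> (\<forall>y<0. zpow \<psi>h m y > y))" if "m \<noteq> 0" for m
    by (rule psih_facts(4)[of \<psi> \<psi>i \<psi>h]) (simp_all add: inv1 inv2 z pos neg up psih_def that)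
  define G where "G = Z_action_groupoid \<psi>"
  define H where "H = Z_action_groupoid \<psi>h"
  define arrA :: "((int \<times> real) set \<times> (int \<times> real \<Rightarrow> real)) set" where "arrA = {({n} \<times> UNIV, snd) | n. True}"
  have G: "arr G = UNIV" "obj G = UNIV" "arr_atlas G = arrA" "obj_atlas G = {(UNIV, id)}"
    "src G = snd" "tgt G = (\<lambda>(k,x). zpow \<psi> k x)" "ident G = (\<lambda>x. (0, x))"
    by (simp_all add: G_def Z_action_groupoid_def arrA_def)
  have H: "arr H = UNIV" "obj H = UNIV" "arr_atlas H = arrA" "obj_atlas H = {(UNIV, id)}"
    "src H = snd" "tgt H = (\<lambda>(k,x). zpow \<psi>h k x)" "ident H = (\<lambda>x. (0, x))"
    by (simp_all add: H_def Z_action_groupoid_def arrA_def)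
  have nb: "\<not> biprincipal_bibundle G H P AP a a' la ra"
  proof
    assume bb: "biprincipal_bibundle G H P AP a a' la ra"
    note bbu = bb[unfolded biprincipal_bibundle_def bibundle_def]
    have man: "manifold P AP" using bbu by (elim conjE) assumption
    have "smooth_map P AP (obj G) (obj_atlas G) a" using bbu by (elim conjE) assumption
    then have sma: "smooth_map P AP UNIV {(UNIV, id)} a" by (simp only: G)
    have "smooth_map P AP (obj H) (obj_atlas H) a'" using bbu by (elim conjE) assumption
    then have sma': "smooth_map P AP UNIV {(UNIV, id)} a'" by (simp only: H)
    have "smooth_on_subset (arr G \<times> P) (prod_atlas (arr_atlas G) AP) (left_dom G P a) P AP (case_prod la)"
      using bbu by (elim conjE) assumption
    then have la_sos: "smooth_on_subset (UNIV \<times> P) (prod_atlas arrA AP) (left_dom G P a) P AP (case_prod la)"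
      by (simp only: G)
    have ld: "left_dom G P a = {(g,p). p \<in> P \<and> snd g = a p}" by (auto simp: left_dom_def G)
    have rd: "right_dom H P a' = {(p,h). p \<in> P \<and> a' p = zpow \<psi>h (fst h) (snd h)}"
      by (auto simp: right_dom_def H split: prod.splits)
    have la_ax: "\<forall>(g,p)\<in>left_dom G P a. la g p \<in> P \<and> a (la g p) = tgt G g" using bbu by (elim conjE) assumption
    have la_tgt: "la (k, a p) p \<in> P" "a (la (k, a p) p) = zpow \<psi> k (a p)" if "p \<in> P" for k p
      using la_ax that unfolding ld G by auto
    have la_id_ax: "\<forall>p\<in>P. la (ident G (a p)) p = p" using bbu by (elim conjE) assumption
    have la_id: "la (0, a p) p = p" if "p \<in> P" for p
      using la_id_ax that G by auto
    have ra_ax: "\<forall>(p,h)\<in>right_dom H P a'. ra p h \<in> P \<and> a' (ra p h) = src H h" using bbu by (elim conjE) assumption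
    have ra_tgt: "ra p (k, y) \<in> P" "a' (ra p (k, y)) = y" if "p \<in> P" "a' p = zpow \<psi>h k y" for p k y
      using ra_ax that unfolding rd H by auto
    have ra_id_ax: "\<forall>p\<in>P. ra p (ident H (a' p)) = p" using bbu by (elim conjE) assumption
    have ra_id: "ra p (0, a' p) = p" if "p \<in> P" for p
      using ra_id_ax that H by auto
    have a'inv_ax: "\<forall>(g,p)\<in>left_dom G P a. a' (la g p) = a' p" using bbu by (elim conjE) assumption
    have a'inv: "a' (la (k, a p) p) = a' p" if "p \<in> P" for k p
      using a'inv_ax that unfolding ld by auto
    have "a ` P = obj G" using bbu by (elim conjE) assumption
    then have asurj: "a ` P = UNIV" by (simp only: G)
    have "diffeo_subsets (P \<times> arr H) (prod_atlas AP (arr_atlas H)) (right_dom H P a')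
                    (P \<times> P) (prod_atlas AP AP) (fibre_sq P a) (\<lambda>(p,h). (p, ra p h))"
      using bbu by (elim conjE) assumption
    then have rdiff: "diffeo_subsets (P \<times> UNIV) (prod_atlas AP arrA) (right_dom H P a')
                    (P \<times> P) (prod_atlas AP AP) (fibre_sq P a) (\<lambda>(p,h). (p, ra p h))"
      by (simp only: H)
    have "diffeo_subsets (arr G \<times> P) (prod_atlas (arr_atlas G) AP) (left_dom G P a)
                    (P \<times> P) (prod_atlas AP AP) (fibre_sq P a') (\<lambda>(g,p). (la g p, p))"
      using bbu by (elim conjE) assumption
    then have ldiff: "diffeo_subsets (UNIV \<times> P) (prod_atlas arrA AP) (left_dom G P a)
                    (P \<times> P) (prod_atlas AP AP) (fibre_sq P a') (\<lambda>(g,p). (la g p, p))"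
      by (simp only: G)
    obtain p0 where p0: "p0 \<in> P" "a p0 = 0" using asurj by (metis UNIV_I imageE)
    define y0 where "y0 = a' p0"
    define p1 where "p1 = la (1, 0) p0"
    have p1P: "p1 \<in> P" and ap1: "a p1 = 0" and a'p1: "a' p1 = y0"
      using la_tgt[OF p0(1), of 1] a'inv[OF p0(1), of 1] p0(2) pf1 z unfolding p1_def y0_def by auto
    define \<Psi> where "\<Psi> = (\<lambda>(p::'p, hh::int \<times> real). (p, ra p hh))"
    define \<Phi> where "\<Phi> = (\<lambda>(g::int \<times> real, p::'p). (la g p, p))"
    define \<Psi>i where "\<Psi>i = inv_into (right_dom H P a') \<Psi>"
    define \<Phi>i where "\<Phi>i = inv_into (left_dom G P a) \<Phi>"
    have bij\<Psi>: "bij_betw \<Psi> (right_dom H P a') (fibre_sq P a)"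
      using rdiff unfolding diffeo_subsets_def \<Psi>_def by blast
    have bij\<Phi>: "bij_betw \<Phi> (left_dom G P a) (fibre_sq P a')"
      using ldiff unfolding diffeo_subsets_def \<Phi>_def by blast
    have \<Psi>i_sos: "smooth_on_subset (P \<times> P) (prod_atlas AP AP) (fibre_sq P a) (P \<times> UNIV) (prod_atlas AP arrA) \<Psi>i"
      using rdiff unfolding diffeo_subsets_def \<Psi>_def \<Psi>i_def by blast
    have \<Phi>i_sos: "smooth_on_subset (P \<times> P) (prod_atlas AP AP) (fibre_sq P a') (UNIV \<times> P) (prod_atlas arrA AP) \<Phi>i"
      using ldiff unfolding diffeo_subsets_def \<Phi>_def \<Phi>i_def by blast
    have \<Psi>char: "\<exists>k y. \<Psi>i (q, q') = (q, (k, y)) \<and> ra q (k, y) = q' \<and> a' q = zpow \<psi>h k y"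
      if "(q, q') \<in> fibre_sq P a" for q q'
    proof -
      have 1: "\<Psi>i (q, q') \<in> right_dom H P a'" "\<Psi> (\<Psi>i (q, q')) = (q, q')"
        using bij\<Psi> that unfolding \<Psi>i_def
        by (auto intro: inv_into_into bij_betw_inv_into_right simp: bij_betw_def)
      obtain r k y where r: "\<Psi>i (q, q') = (r, (k, y))" by (metis prod.exhaust)
      show ?thesis using 1 r unfolding rd \<Psi>_def by auto
    qed
    have \<Phi>char: "\<exists>k x. \<Phi>i (q, q') = ((k, x), q') \<and> la (k, x) q' = q \<and> x = a q'"
      if "(q, q') \<in> fibre_sq P a'" for q q'
    proof -
      have 1: "\<Phi>i (q, q') \<in> left_dom G P a" "\<Phi> (\<Phi>i (q, q')) = (q, q')"
        using bij\<Phi> that unfolding \<Phi>i_def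
        by (auto intro: inv_into_into bij_betw_inv_into_right simp: bij_betw_def)
      obtain r k x where r: "\<Phi>i (q, q') = ((k, x), r)" by (metis prod.exhaust)
      show ?thesis using 1 r unfolding ld \<Phi>_def by auto
    qed
    have fs01: "(p0, p1) \<in> fibre_sq P a" using p0 p1P ap1 by (simp add: fibre_sq_def)
    obtain m y where my: "\<Psi>i (p0, p1) = (p0, (m, y))" "ra p0 (m, y) = p1" "a' p0 = zpow \<psi>h m y"
      using \<Psi>char[OF fs01] by blast
    have yy: "y = y0" using ra_tgt(2)[OF p0(1) my(3)] my(2) a'p1 by simp
    have m0: "m \<noteq> 0"
    proof
      assume "m = 0"
      then have "p1 = ra p0 (0, y)" using my(2) by simp
      also have "\<dots> = p0" using ra_id[OF p0(1)] yy unfolding y0_def by simp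
      finally have "p1 = p0" .
      then have "\<Phi> ((1, 0), p0) = \<Phi> ((0, 0), p0)" using la_id[OF p0(1)] p0(2) unfolding \<Phi>_def p1_def by simp
      moreover have "((1, 0), p0) \<in> left_dom G P a" "((0, 0), p0) \<in> left_dom G P a" using p0 unfolding ld by auto
      ultimately have "((1::int, 0::real), p0) = ((0, 0), p0)"
        using inj_onD[OF bij_betw_imp_inj_on[OF bij\<Phi>]] by blast
      then show False by simp
    qed
    have y00: "y0 = 0"
    proof (rule ccontr)
      assume "y0 \<noteq> 0"
      moreover have "zpow \<psi>h m y0 = y0" using my(3) yy y0_def by metis
      ultimately show False using pf4[OF m0] by (metis less_irrefl linorder_neqE_linordered_idom)
    qed
    have manU: "\<forall>(U, \<phi>)\<in>AP. U \<subseteq> P \<and> inj_on \<phi> U \<and> open (\<phi> ` U)"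
      using man unfolding manifold_def by (elim conjE) assumption
    have cover: "P = \<Union>(fst ` AP)"
      using man unfolding manifold_def by (elim conjE) assumption
    have chartex: "\<exists>U \<phi>. (U, \<phi>) \<in> AP \<and> p \<in> U" if "p \<in> P" for p
    proof -
      have "p \<in> \<Union>(fst ` AP)" using cover that by blast
      then obtain X where "X \<in> AP" "p \<in> fst X" by blast
      then show ?thesis by (cases X) auto
    qed
    obtain U \<phi>c where U: "(U, \<phi>c) \<in> AP" "p0 \<in> U" using chartex[OF p0(1)] by blast
    obtain U1 \<phi>1 where U1: "(U1, \<phi>1) \<in> AP" "p1 \<in> U1" using chartex[OF p1P] by blast
    have Up: "U \<subseteq> P" "inj_on \<phi>c U" "open (\<phi>c ` U)" using manU U(1) by auto
    have U1p: "U1 \<subseteq> P" "inj_on \<phi>1 U1" "open (\<phi>1 ` U1)" using manU U1(1) by auto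
    have acont: "continuous_on (\<phi> ` V) (a \<circ> inv_into V \<phi>)" if "(V, \<phi>) \<in> AP" for V \<phi>
    proof -
      have "\<forall>(U, \<phi>)\<in>AP. \<forall>(V, \<theta>)\<in>{(UNIV, id)}. open (\<phi> ` (U \<inter> a -` V)) \<and>
        smooth_on (\<phi> ` (U \<inter> a -` V)) (\<theta> \<circ> a \<circ> inv_into U \<phi>)"
        using sma unfolding smooth_map_def by (elim conjE) assumption
      then have "smooth_on (\<phi> ` (V \<inter> a -` UNIV)) (id \<circ> a \<circ> inv_into V \<phi>)"
        using that by fastforce
      then have "smooth_on (\<phi> ` V) (a \<circ> inv_into V \<phi>)" by simp
      then show ?thesis by (rule smooth_on_cont)
    qed
    have acont': "continuous_on (\<phi> ` V) (a' \<circ> inv_into V \<phi>)" if "(V, \<phi>) \<in> AP" for V \<phi>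
    proof -
      have "\<forall>(U, \<phi>)\<in>AP. \<forall>(V, \<theta>)\<in>{(UNIV, id)}. open (\<phi> ` (U \<inter> a' -` V)) \<and>
        smooth_on (\<phi> ` (U \<inter> a' -` V)) (\<theta> \<circ> a' \<circ> inv_into U \<phi>)"
        using sma' unfolding smooth_map_def by (elim conjE) assumption
      then have "smooth_on (\<phi> ` (V \<inter> a' -` UNIV)) (id \<circ> a' \<circ> inv_into V \<phi>)"
        using that by fastforce
      then have "smooth_on (\<phi> ` V) (a' \<circ> inv_into V \<phi>)" by simp
      then show ?thesis by (rule smooth_on_cont)
    qed
    define c0 where "c0 = \<phi>c p0"
    define \<iota> where "\<iota> = inv_into U \<phi>c"
    define \<iota>1 where "\<iota>1 = inv_into U1 \<phi>1"
    have \<iota>c0: "\<iota> c0 = p0" unfolding \<iota>_def c0_def using inv_into_f_f[OF Up(2) U(2)] .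
    have Uc0: "c0 \<in> \<phi>c ` U" unfolding c0_def using U(2) by blast
    have \<iota>U: "\<iota> z \<in> U" "\<phi>c (\<iota> z) = z" if "z \<in> \<phi>c ` U" for z
      unfolding \<iota>_def using that by (auto intro: inv_into_into f_inv_into_f)
    have ch_UU: "(U \<times> U, \<lambda>(x, y). (\<phi>c x, \<phi>c y)) \<in> prod_atlas AP AP"
      using U(1) unfolding prod_atlas_def by blast
    have inj_UU: "inj_on (\<lambda>(x, y). (\<phi>c x, \<phi>c y)) (U \<times> U)"
      using Up(2) by (auto simp: inj_on_def)
    have ch_U0: "(U \<times> ({0} \<times> UNIV), \<lambda>(x, y). (\<phi>c x, snd y)) \<in> prod_atlas AP arrA"
      using U(1) unfolding prod_atlas_def arrA_def by blast
    have fs00: "(p0, p0) \<in> fibre_sq P a" using p0 by (simp add: fibre_sq_def)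
    have rd00: "(p0, (0, y0)) \<in> right_dom H P a'" unfolding rd y0_def using p0 pf2 by simp
    have \<Psi>00: "\<Psi>i (p0, p0) = (p0, (0, y0))"
    proof -
      have "\<Psi> (p0, (0, y0)) = (p0, p0)" unfolding \<Psi>_def y0_def using ra_id[OF p0(1)] by simp
      then show ?thesis unfolding \<Psi>i_def using bij_betw_inv_into_left[OF bij\<Psi> rd00] by simp
    qed
    obtain \<epsilon>a where \<epsilon>a: "\<epsilon>a > 0" "\<forall>x\<in>fibre_sq P a \<inter> (U \<times> U).
        dist ((\<lambda>(x, y). (\<phi>c x, \<phi>c y)) x) ((\<lambda>(x, y). (\<phi>c x, \<phi>c y)) (p0, p0)) < \<epsilon>a \<longrightarrow>
        \<Psi>i x \<in> U \<times> ({0} \<times> UNIV) \<and> dist ((\<lambda>(x, y). (\<phi>c x, snd y)) (\<Psi>i x)) ((\<lambda>(x, y). (\<phi>c x, snd y)) (\<Psi>i (p0, p0))) < 1"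
      using sos_cont[OF \<Psi>i_sos fs00 ch_UU _ inj_UU ch_U0, of 1] U(2) \<Psi>00 by auto
    have LIa: "q1 = q2" if q: "q1 \<in> U" "q2 \<in> U" "dist (\<phi>c q1) c0 < \<epsilon>a/2" "dist (\<phi>c q2) c0 < \<epsilon>a/2" "a q1 = a q2" for q1 q2
    proof -
      have fs: "(q1, q2) \<in> fibre_sq P a" using q Up(1) by (auto simp: fibre_sq_def)
      have "dist (\<phi>c q1, \<phi>c q2) (c0, c0) < \<epsilon>a" using dist_pair_le[of "\<phi>c q1" "\<phi>c q2" c0 c0] q by linarith
      then have in0: "\<Psi>i (q1, q2) \<in> U \<times> ({0} \<times> UNIV)" using \<epsilon>a(2) fs q unfolding c0_def by auto
      obtain k y where ky: "\<Psi>i (q1, q2) = (q1, (k, y))" "ra q1 (k, y) = q2" "a' q1 = zpow \<psi>h k y"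
        using \<Psi>char[OF fs] by blast
      have "k = 0" using in0 ky(1) by auto
      then have "y = a' q1" using ky(3) pf2 by simp
      then show ?thesis using ky(2) \<open>k = 0\<close> ra_id q(1) Up(1) by auto
    qed
    have ch_0U: "(({0} \<times> UNIV) \<times> U, \<lambda>(x, y). (snd x, \<phi>c y)) \<in> prod_atlas arrA AP"
      using U(1) unfolding prod_atlas_def arrA_def by blast
    have fs00': "(p0, p0) \<in> fibre_sq P a'" using p0 by (simp add: fibre_sq_def)
    have ld00: "((0, 0), p0) \<in> left_dom G P a" unfolding ld using p0 by simp
    have \<Phi>00: "\<Phi>i (p0, p0) = ((0, 0), p0)"
    proof -
      have "\<Phi> ((0, 0), p0) = (p0, p0)" unfolding \<Phi>_def using la_id[OF p0(1)] p0(2) by simp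
      then show ?thesis unfolding \<Phi>i_def using bij_betw_inv_into_left[OF bij\<Phi> ld00] by simp
    qed
    obtain \<epsilon>b where \<epsilon>b: "\<epsilon>b > 0" "\<forall>x\<in>fibre_sq P a' \<inter> (U \<times> U).
        dist ((\<lambda>(x, y). (\<phi>c x, \<phi>c y)) x) ((\<lambda>(x, y). (\<phi>c x, \<phi>c y)) (p0, p0)) < \<epsilon>b \<longrightarrow>
        \<Phi>i x \<in> ({0} \<times> UNIV) \<times> U \<and> dist ((\<lambda>(x, y). (snd x, \<phi>c y)) (\<Phi>i x)) ((\<lambda>(x, y). (snd x, \<phi>c y)) (\<Phi>i (p0, p0))) < 1"
      using sos_cont[OF \<Phi>i_sos fs00' ch_UU _ inj_UU ch_0U, of 1] U(2) \<Phi>00 by auto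
    have LIb: "q1 = q2" if q: "q1 \<in> U" "q2 \<in> U" "dist (\<phi>c q1) c0 < \<epsilon>b/2" "dist (\<phi>c q2) c0 < \<epsilon>b/2" "a' q1 = a' q2" for q1 q2
    proof -
      have fs: "(q1, q2) \<in> fibre_sq P a'" using q Up(1) by (auto simp: fibre_sq_def)
      have "dist (\<phi>c q1, \<phi>c q2) (c0, c0) < \<epsilon>b" using dist_pair_le[of "\<phi>c q1" "\<phi>c q2" c0 c0] q by linarith
      then have in0: "\<Phi>i (q1, q2) \<in> ({0} \<times> UNIV) \<times> U" using \<epsilon>b(2) fs q unfolding c0_def by auto
      obtain k x where kx: "\<Phi>i (q1, q2) = ((k, x), q2)" "la (k, x) q2 = q1" "x = a q2"
        using \<Phi>char[OF fs] by blast
      have "k = 0" using in0 kx(1) by auto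
      then show ?thesis using kx la_id q(2) Up(1) by auto
    qed
    define \<sigma> where "\<sigma> q = la (1, a q) q" for q
    have \<sigma>P: "\<sigma> q \<in> P" "a (\<sigma> q) = \<psi> (a q)" "a' (\<sigma> q) = a' q" if "q \<in> P" for q
      using la_tgt[OF that, of 1] a'inv[OF that, of 1] pf1 unfolding \<sigma>_def by auto
    have ch_1U: "(({1} \<times> UNIV) \<times> U, \<lambda>(x, y). (snd x, \<phi>c y)) \<in> prod_atlas arrA AP"
      using U(1) unfolding prod_atlas_def arrA_def by blast
    have inj_1U: "inj_on (\<lambda>(x, y). (snd x, \<phi>c y)) (({1} \<times> UNIV) \<times> U)"
      using Up(2) by (auto simp: inj_on_def)
    have ld10: "((1, 0), p0) \<in> left_dom G P a" unfolding ld using p0 by simp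
    have sig: "\<exists>\<epsilon>>0. \<forall>q. q \<in> U \<longrightarrow> dist (a q, \<phi>c q) (0, c0) < \<epsilon> \<longrightarrow> \<sigma> q \<in> U1 \<and> dist (\<phi>1 (\<sigma> q)) (\<phi>1 p1) < \<eta>"
      if eta: "\<eta> > 0" for \<eta>
    proof -
      obtain \<epsilon> where \<epsilon>: "\<epsilon> > 0" "\<forall>x\<in>left_dom G P a \<inter> (({1} \<times> UNIV) \<times> U).
          dist ((\<lambda>(x, y). (snd x, \<phi>c y)) x) ((\<lambda>(x, y). (snd x, \<phi>c y)) ((1, 0), p0)) < \<epsilon> \<longrightarrow>
          case_prod la x \<in> U1 \<and> dist (\<phi>1 (case_prod la x)) (\<phi>1 (case_prod la ((1, 0), p0))) < \<eta>"
        using sos_cont[OF la_sos ld10 ch_1U _ inj_1U U1(1), of \<eta>] U(2) U1(2) eta unfolding p1_def by auto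
      show ?thesis
      proof (intro exI[of _ \<epsilon>] conjI allI impI)
        fix q assume q: "q \<in> U" "dist (a q, \<phi>c q) (0, c0) < \<epsilon>"
        have "((1, a q), q) \<in> left_dom G P a \<inter> (({1} \<times> UNIV) \<times> U)" unfolding ld using q(1) Up(1) by auto
        from \<epsilon>(2)[rule_format, OF this] q(2)
        have "\<sigma> q \<in> U1 \<and> dist (\<phi>1 (\<sigma> q)) (\<phi>1 p1) < \<eta>"
          unfolding \<sigma>_def p1_def c0_def by simp
        then show "\<sigma> q \<in> U1" "dist (\<phi>1 (\<sigma> q)) (\<phi>1 p1) < \<eta>" by auto
      qed (use \<epsilon> in auto)
    qed
    \<comment> \<open>the conjugacy near (p0, p1)\<close>
    have ch_UU1: "(U \<times> U1, \<lambda>(x, y). (\<phi>c x, \<phi>1 y)) \<in> prod_atlas AP AP"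
      using U(1) U1(1) unfolding prod_atlas_def by blast
    have inj_UU1: "inj_on (\<lambda>(x, y). (\<phi>c x, \<phi>1 y)) (U \<times> U1)"
      using Up(2) U1p(2) by (auto simp: inj_on_def)
    have ch_Um: "(U \<times> ({m} \<times> UNIV), \<lambda>(x, y). (\<phi>c x, snd y)) \<in> prod_atlas AP arrA"
      using U(1) unfolding prod_atlas_def arrA_def by blast
    obtain \<epsilon>3 where \<epsilon>3: "\<epsilon>3 > 0" "\<forall>x\<in>fibre_sq P a \<inter> (U \<times> U1).
        dist ((\<lambda>(x, y). (\<phi>c x, \<phi>1 y)) x) ((\<lambda>(x, y). (\<phi>c x, \<phi>1 y)) (p0, p1)) < \<epsilon>3 \<longrightarrow>
        \<Psi>i x \<in> U \<times> ({m} \<times> UNIV) \<and> dist ((\<lambda>(x, y). (\<phi>c x, snd y)) (\<Psi>i x)) ((\<lambda>(x, y). (\<phi>c x, snd y)) (\<Psi>i (p0, p1))) < 1"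
      using sos_cont[OF \<Psi>i_sos fs01 ch_UU1 _ inj_UU1 ch_Um, of 1] U(2) U1(2) my(1) by auto
    have conj: "a' q = zpow \<psi>h m (a' q')"
      if q: "q \<in> U" "q' \<in> U1" "q' \<in> P" "a q = a q'" "dist (\<phi>c q) c0 < \<epsilon>3/2" "dist (\<phi>1 q') (\<phi>1 p1) < \<epsilon>3/2" for q q'
    proof -
      have fs: "(q, q') \<in> fibre_sq P a" using q Up(1) by (auto simp: fibre_sq_def)
      have "dist (\<phi>c q, \<phi>1 q') (c0, \<phi>1 p1) < \<epsilon>3" using dist_pair_le[of "\<phi>c q" "\<phi>1 q'" c0 "\<phi>1 p1"] q by linarith
      then have inm: "\<Psi>i (q, q') \<in> U \<times> ({m} \<times> UNIV)" using \<epsilon>3(2) fs q unfolding c0_def by auto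
      obtain k y where ky: "\<Psi>i (q, q') = (q, (k, y))" "ra q (k, y) = q'" "a' q = zpow \<psi>h k y"
        using \<Psi>char[OF fs] by blast
      have "k = m" using inm ky(1) by auto
      moreover have "a' q' = y" using ra_tgt(2)[of q k y] ky q(1) Up(1) by auto
      ultimately show ?thesis using ky(3) by simp
    qed
    obtain v :: 'e where v: "v \<in> Basis" using nonempty_Basis by blast
    have nv: "norm v = 1" "v \<noteq> 0" using v by (auto simp: nonzero_Basis)
    obtain r0 where r0: "r0 > 0" "ball c0 r0 \<subseteq> \<phi>c ` U" using Up(3) Uc0 open_contains_ball by blast
    define \<gamma> where "\<gamma> t = \<iota> (c0 + t *\<^sub>R v)" for t
    have dcv: "dist (c0 + t *\<^sub>R v) c0 = \<bar>t\<bar>" for t using nv by (simp add: dist_norm)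
    have inO: "c0 + t *\<^sub>R v \<in> \<phi>c ` U" if "\<bar>t\<bar> < r0" for t
      using r0(2) dcv[of t] that by (auto simp: dist_commute)
    have \<gamma>U: "\<gamma> t \<in> U" "\<phi>c (\<gamma> t) = c0 + t *\<^sub>R v" "\<gamma> t \<in> P" "dist (\<phi>c (\<gamma> t)) c0 = \<bar>t\<bar>" if "\<bar>t\<bar> < r0" for t
      using \<iota>U[OF inO[OF that]] Up(1) dcv[of t] unfolding \<gamma>_def by auto
    define \<alpha> where "\<alpha> t = a (\<gamma> t)" for t
    define \<beta> where "\<beta> t = a' (\<gamma> t)" for t
    have Ac: "continuous_on (\<phi>c ` U) (a \<circ> \<iota>)" using acont[OF U(1)] unfolding \<iota>_def .
    have Ac': "continuous_on (\<phi>c ` U) (a' \<circ> \<iota>)" using acont'[OF U(1)] unfolding \<iota>_def .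
    have lin: "continuous_on S (\<lambda>t. c0 + t *\<^sub>R v)" for S by (intro continuous_intros)
    define \<delta> where "\<delta> = min (r0/2) (min (\<epsilon>a/4) (min (\<epsilon>b/4) (\<epsilon>3/4)))"
    have \<delta>: "\<delta> > 0" "\<delta> < r0" "\<delta> < \<epsilon>a/2" "\<delta> < \<epsilon>b/2" "\<delta> < \<epsilon>3/2"
      using r0 \<epsilon>a \<epsilon>b \<epsilon>3 by (auto simp: \<delta>_def)
    have sub: "(\<lambda>t. c0 + t *\<^sub>R v) ` {-\<delta>..\<delta>} \<subseteq> \<phi>c ` U" using inO \<delta> by auto
    have ca: "continuous_on {-\<delta>..\<delta>} \<alpha>"
      using continuous_on_compose2[OF Ac lin sub] unfolding \<alpha>_def \<gamma>_def by (simp add: o_def)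
    have cb: "continuous_on {-\<delta>..\<delta>} \<beta>"
      using continuous_on_compose2[OF Ac' lin sub] unfolding \<beta>_def \<gamma>_def by (simp add: o_def)
    have tI: "\<bar>t\<bar> < r0" "\<bar>t\<bar> < \<epsilon>a/2" "\<bar>t\<bar> < \<epsilon>b/2" "\<bar>t\<bar> < \<epsilon>3/2" if "t \<in> {-\<delta>..\<delta>}" for t
      using that \<delta> by auto
    have \<gamma>inj: "t1 = t2" if "\<gamma> t1 = \<gamma> t2" "\<bar>t1\<bar> < r0" "\<bar>t2\<bar> < r0" for t1 t2
    proof -
      have "c0 + t1 *\<^sub>R v = c0 + t2 *\<^sub>R v" using \<gamma>U(2)[OF that(2)] \<gamma>U(2)[OF that(3)] that(1) by metis
      then show ?thesis using nv(2) by simp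
    qed
    have ia: "inj_on \<alpha> {-\<delta>..\<delta>}"
    proof (rule inj_onI)
      fix t1 t2 assume t: "t1 \<in> {-\<delta>..\<delta>}" "t2 \<in> {-\<delta>..\<delta>}" "\<alpha> t1 = \<alpha> t2"
      have "\<gamma> t1 = \<gamma> t2"
        using LIa[of "\<gamma> t1" "\<gamma> t2"] \<gamma>U[OF tI(1)[OF t(1)]] \<gamma>U[OF tI(1)[OF t(2)]] tI[OF t(1)] tI[OF t(2)] t(3)
        unfolding \<alpha>_def by auto
      then show "t1 = t2" using \<gamma>inj tI(1)[OF t(1)] tI(1)[OF t(2)] by blast
    qed
    have ib: "inj_on \<beta> {-\<delta>..\<delta>}"
    proof (rule inj_onI)
      fix t1 t2 assume t: "t1 \<in> {-\<delta>..\<delta>}" "t2 \<in> {-\<delta>..\<delta>}" "\<beta> t1 = \<beta> t2"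
      have "\<gamma> t1 = \<gamma> t2"
        using LIb[of "\<gamma> t1" "\<gamma> t2"] \<gamma>U[OF tI(1)[OF t(1)]] \<gamma>U[OF tI(1)[OF t(2)]] tI[OF t(1)] tI[OF t(2)] t(3)
        unfolding \<beta>_def by auto
      then show "t1 = t2" using \<gamma>inj tI(1)[OF t(1)] tI(1)[OF t(2)] by blast
    qed
    have \<gamma>0: "\<gamma> 0 = p0" unfolding \<gamma>_def using \<iota>c0 by simp
    have a0: "\<alpha> 0 = 0" unfolding \<alpha>_def using \<gamma>0 p0 by simp
    have b0: "\<beta> 0 = 0" unfolding \<beta>_def using \<gamma>0 y00 y0_def by simp
    have upall: "\<forall>x. x \<noteq> 0 \<longrightarrow> x < \<psi> x" using up by blast
    have isA: "isCont (a \<circ> \<iota>) c0" using Ac Up(3) Uc0 continuous_on_eq_continuous_at by blast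
    have near: "\<exists>d>0. d \<le> r0 \<and> (\<forall>t. \<bar>t\<bar> < d \<longrightarrow> \<sigma> (\<gamma> t) \<in> U1 \<and> dist (\<phi>1 (\<sigma> (\<gamma> t))) (\<phi>1 p1) < \<eta>)"
      if eta: "\<eta> > 0" for \<eta>
    proof -
      obtain \<epsilon>4 where \<epsilon>4: "\<epsilon>4 > 0" "\<forall>q. q \<in> U \<longrightarrow> dist (a q, \<phi>c q) (0, c0) < \<epsilon>4 \<longrightarrow> \<sigma> q \<in> U1 \<and> dist (\<phi>1 (\<sigma> q)) (\<phi>1 p1) < \<eta>"
        using sig[OF eta] by blast
      have "\<epsilon>4/2 > 0" using \<epsilon>4 by simp
      then obtain \<rho> where \<rho>: "\<rho> > 0" "\<forall>z. dist z c0 < \<rho> \<longrightarrow> dist ((a \<circ> \<iota>) z) ((a \<circ> \<iota>) c0) < \<epsilon>4/2"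
        using isA unfolding continuous_at_eps_delta by blast
      define d where "d = min \<rho> (min (\<epsilon>4/2) r0)"
      show ?thesis
      proof (intro exI[of _ d] conjI allI impI)
        show "d > 0" using \<rho> \<epsilon>4 r0 by (simp add: d_def)
        show "d \<le> r0" by (simp add: d_def)
        fix t assume t: "\<bar>t\<bar> < d"
        then have tr: "\<bar>t\<bar> < r0" "\<bar>t\<bar> < \<rho>" "\<bar>t\<bar> < \<epsilon>4/2" by (auto simp: d_def)
        have "dist ((a \<circ> \<iota>) (c0 + t *\<^sub>R v)) ((a \<circ> \<iota>) c0) < \<epsilon>4/2" using \<rho>(2) dcv[of t] tr by auto
        then have "\<bar>a (\<gamma> t)\<bar> < \<epsilon>4/2" using \<iota>c0 p0(2) unfolding \<gamma>_def by (simp add: dist_real_def)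
        then have "dist (a (\<gamma> t), \<phi>c (\<gamma> t)) (0, c0) < \<epsilon>4"
          using dist_pair_le[of "a (\<gamma> t)" "\<phi>c (\<gamma> t)" 0 c0] \<gamma>U(4)[OF tr(1)] tr(3) by (simp add: dist_real_def)
        then have "\<sigma> (\<gamma> t) \<in> U1 \<and> dist (\<phi>1 (\<sigma> (\<gamma> t))) (\<phi>1 p1) < \<eta>" using \<epsilon>4(2) \<gamma>U(1)[OF tr(1)] by blast
        then show "\<sigma> (\<gamma> t) \<in> U1" "dist (\<phi>1 (\<sigma> (\<gamma> t))) (\<phi>1 p1) < \<eta>" by auto
      qed
    qed
    have H\<psi>: "\<forall>\<epsilon>>0. \<exists>d>0. \<forall>t. \<bar>t\<bar> < d \<longrightarrow> \<bar>\<psi> (\<alpha> t)\<bar> < \<epsilon>"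
    proof (intro allI impI)
      fix \<epsilon> :: real assume \<epsilon>: "\<epsilon> > 0"
      have "isCont (a \<circ> \<iota>1) (\<phi>1 p1)"
        using acont[OF U1(1)] U1p(3) U1(2) continuous_on_eq_continuous_at unfolding \<iota>1_def by blast
      then obtain \<eta> where \<eta>: "\<eta> > 0" "\<forall>w. dist w (\<phi>1 p1) < \<eta> \<longrightarrow> dist ((a \<circ> \<iota>1) w) ((a \<circ> \<iota>1) (\<phi>1 p1)) < \<epsilon>"
        using \<epsilon> unfolding continuous_at_eps_delta by blast
      have i1p1: "\<iota>1 (\<phi>1 p1) = p1" unfolding \<iota>1_def using inv_into_f_f[OF U1p(2) U1(2)] .
      obtain d where d: "d > 0" "d \<le> r0" "\<forall>t. \<bar>t\<bar> < d \<longrightarrow> \<sigma> (\<gamma> t) \<in> U1 \<and> dist (\<phi>1 (\<sigma> (\<gamma> t))) (\<phi>1 p1) < \<eta>"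
        using near[OF \<eta>(1)] by blast
      show "\<exists>d>0. \<forall>t. \<bar>t\<bar> < d \<longrightarrow> \<bar>\<psi> (\<alpha> t)\<bar> < \<epsilon>"
      proof (intro exI[of _ d] conjI allI impI)
        show "d > 0" by (fact d(1))
        fix t assume t: "\<bar>t\<bar> < d"
        have s: "\<sigma> (\<gamma> t) \<in> U1" "dist (\<phi>1 (\<sigma> (\<gamma> t))) (\<phi>1 p1) < \<eta>" using d(3) t by auto
        have ii: "\<iota>1 (\<phi>1 (\<sigma> (\<gamma> t))) = \<sigma> (\<gamma> t)" unfolding \<iota>1_def using inv_into_f_f[OF U1p(2) s(1)] .
        have "\<bar>a (\<iota>1 (\<phi>1 (\<sigma> (\<gamma> t))))\<bar> < \<epsilon>" using \<eta>(2) s(2) i1p1 ap1 by (simp add: dist_real_def)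
        then have "\<bar>a (\<sigma> (\<gamma> t))\<bar> < \<epsilon>" by (simp only: ii)
        moreover have "a (\<sigma> (\<gamma> t)) = \<psi> (\<alpha> t)" using \<sigma>P(2) \<gamma>U(3)[of t] t d(2) unfolding \<alpha>_def by auto
        ultimately show "\<bar>\<psi> (\<alpha> t)\<bar> < \<epsilon>" by simp
      qed
    qed
    have Hc: "\<exists>d>0. \<forall>t t'. \<bar>t\<bar> < d \<longrightarrow> \<bar>t'\<bar> \<le> \<delta> \<longrightarrow> \<alpha> t' = \<psi> (\<alpha> t) \<longrightarrow> \<beta> t' = zpow \<psi>h m (\<beta> t)"
    proof -
      have "\<epsilon>3/2 > 0" using \<epsilon>3 by simp
      then obtain d where d: "d > 0" "d \<le> r0" "\<forall>t. \<bar>t\<bar> < d \<longrightarrow> \<sigma> (\<gamma> t) \<in> U1 \<and> dist (\<phi>1 (\<sigma> (\<gamma> t))) (\<phi>1 p1) < \<epsilon>3/2"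
        using near by blast
      show ?thesis
      proof (intro exI[of _ d] conjI allI impI)
        show "d > 0" by (fact d(1))
        fix t t' assume t: "\<bar>t\<bar> < d" "\<bar>t'\<bar> \<le> \<delta>" "\<alpha> t' = \<psi> (\<alpha> t)"
        have tr: "\<bar>t\<bar> < r0" "\<bar>t'\<bar> < r0" "\<bar>t'\<bar> < \<epsilon>3/2" using t d(2) \<delta> by auto
        have s: "\<sigma> (\<gamma> t) \<in> U1" "dist (\<phi>1 (\<sigma> (\<gamma> t))) (\<phi>1 p1) < \<epsilon>3/2" using d(3) t by auto
        have gP: "\<gamma> t \<in> P" using \<gamma>U(3)[OF tr(1)] .
        have "a (\<gamma> t') = a (\<sigma> (\<gamma> t))" using t(3) \<sigma>P(2)[OF gP] unfolding \<alpha>_def by simp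
        then have "a' (\<gamma> t') = zpow \<psi>h m (a' (\<sigma> (\<gamma> t)))"
          using conj[of "\<gamma> t'" "\<sigma> (\<gamma> t)"] \<gamma>U[OF tr(2)] s \<sigma>P(1)[OF gP] tr(3) by auto
        then show "\<beta> t' = zpow \<psi>h m (\<beta> t)" using \<sigma>P(3)[OF gP] unfolding \<beta>_def by simp
      qed
    qed
    show False
      using final_contra[OF \<delta>(1) ca cb ia ib a0 b0 upall pf4[OF m0] H\<psi> Hc] .
  qed
  then show ?thesis unfolding G_def H_def by blast
qed

end
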